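(* Let $n$ be a nonnegative integer and let $a,b,c\in\mathbb{C}$ be such that all hypergeometric series and quotients below are defined (no lower parameter is zero or a negative integer). Then \[ {}_4F_3\!\left(\left.{-n,\frac{a}{2},\frac{a+1}{2},b \atop a,1+a-c,c}\right| 4\right) =\frac{(c-b)_n}{(c)_n}\, {}_4F_3\!\left(\left.{-n,1-c-n,b,1+b-c \atop 1+a-c,\frac{1+b-c-n}{2},\frac{2+b-c-n}{2}}\right| \frac{1}{4}\right). \]
   Context: For $a\in\mathbb{C}$, $(a)_0=1$ and $(a)_k=a(a+1)\cdots(a+k-1)$ for $k\ge1$. The hypergeometric series is ${}_rF_s\!\left(\left.{\alpha_1,\ldots,\alpha_r\atop \beta_1,\ldots,\beta_s}\right|z\right)=\sum_{k\ge0}\frac{(\alpha_1)_k\cdots(\alpha_r)_k}{k!(\beta_1)_k\cdots(\beta_s)_k}z^k$, with no lower parameter zero or a negative integer; when an upper parameter is $-n$ ($n$ a nonnegative integer) it is a finite sum over $0\le k\le n$. *)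

theory Defs
  imports Complex_Main "HOL-Library.Nonpos_Ints"
begin

definition hyp_term :: "complex list \<Rightarrow> complex list \<Rightarrow> complex \<Rightarrow> nat \<Rightarrow> complex" where
  "hyp_term as bs z k =
     (\<Prod>a\<leftarrow>as. pochhammer a k) / (fact k * (\<Prod>b\<leftarrow>bs. pochhammer b k)) * z ^ k"

definition hyp_term_series :: "nat \<Rightarrow> complex list \<Rightarrow> complex list \<Rightarrow> complex \<Rightarrow> complex" where
  "hyp_term_series n as bs z = (\<Sum>k\<le>n. hyp_term (- of_nat n # as) bs z k)"

end

theory Submission imports Defs "HOL-Computational_Algebra.Formal_Power_Series" begin

lemma poch_nz: "(z::complex) \<notin> \<int>\<^sub>\<le>\<^sub>0 \<Longrightarrow> pochhammer z k \<noteq> 0"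
  by (auto simp: pochhammer_eq_0_iff)

lemma poch_expand_poly:
  fixes x c :: complex
  shows "pochhammer (x + c - 1 + of_nat k) k =
    (\<Sum>m\<le>k. of_nat (k choose m) * pochhammer (c + of_nat (k - m)) m * pochhammer (x + of_nat m) (k - m))"
proof -
  have h1: "pochhammer (1 - c - of_nat k) m = (-1)^m * pochhammer (c + of_nat (k - m)) m" if "m \<le> k" for m
    using pochhammer_minus[of "c + of_nat k - 1" m] that by (simp add: of_nat_diff algebra_simps)
  have h2: "pochhammer (1 - x - of_nat k) (k - m) = (-1)^(k-m) * pochhammer (x + of_nat m) (k - m)" if "m \<le> k" for m
    using pochhammer_minus[of "x + of_nat k - 1" "k - m"] that by (simp add: of_nat_diff algebra_simps)
  have h3: "pochhammer (2 - c - x - 2 * of_nat k) k = (-1)^k * pochhammer (x + c - 1 + of_nat k) k"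
    using pochhammer_minus[of "c + x + 2 * of_nat k - 2" k] by (simp add: algebra_simps)
  have "pochhammer (2 - c - x - 2 * of_nat k) k =
     (\<Sum>m\<le>k. of_nat (k choose m) * pochhammer (1 - c - of_nat k) m * pochhammer (1 - x - of_nat k) (k - m))"
    using pochhammer_binomial_sum[of "1 - c - of_nat k" "1 - x - of_nat k" k] by (simp add: algebra_simps)
  also have "\<dots> = (\<Sum>m\<le>k. (-1)^k * (of_nat (k choose m) * pochhammer (c + of_nat (k - m)) m * pochhammer (x + of_nat m) (k - m)))"
  proof (rule sum.cong)
    fix m assume "m \<in> {..k}"
    then have mk: "m \<le> k" by simp
    have "(-1::complex)^m * (-1)^(k-m) = (-1)^k" using mk by (simp flip: power_add)
    then show "of_nat (k choose m) * pochhammer (1 - c - of_nat k) m * pochhammer (1 - x - of_nat k) (k - m) =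
       (-1)^k * (of_nat (k choose m) * pochhammer (c + of_nat (k - m)) m * pochhammer (x + of_nat m) (k - m))"
      using h1[OF mk] h2[OF mk] by (simp add: algebra_simps)
  qed simp
  finally show ?thesis unfolding h3 by (simp flip: sum_distrib_left)
qed

lemma poch_expand_div:
  fixes x c :: complex
  assumes "pochhammer x k \<noteq> 0" "pochhammer c k \<noteq> 0"
  shows "pochhammer (x + c - 1 + of_nat k) k / (pochhammer x k * pochhammer c k) =
    (\<Sum>m\<le>k. of_nat (k choose m) / (pochhammer c (k - m) * pochhammer x m))"
  unfolding poch_expand_poly sum_divide_distrib
proof (rule sum.cong)
  fix m assume "m \<in> {..k}"
  then have mk: "m \<le> k" by simp
  have c: "pochhammer c k = pochhammer c (k - m) * pochhammer (c + of_nat (k - m)) m"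
    using pochhammer_product[of "k - m" k c] mk by simp
  have x: "pochhammer x k = pochhammer x m * pochhammer (x + of_nat m) (k - m)"
    using pochhammer_product[of m k x] mk by simp
  show "of_nat (k choose m) * pochhammer (c + of_nat (k - m)) m * pochhammer (x + of_nat m) (k - m) /
         (pochhammer x k * pochhammer c k) = of_nat (k choose m) / (pochhammer c (k - m) * pochhammer x m)"
    using assms unfolding c x by (simp add: field_simps)
qed simp

lemma rhs_term:
  fixes b c x :: complex and m n :: nat
  assumes mn: "m \<le> n" and cn: "pochhammer c n \<noteq> 0"
    and yn: "pochhammer (1 + b - c - of_nat n) (2 * m) \<noteq> 0"
  shows "pochhammer (- of_nat n) m * pochhammer b m / (fact m * pochhammer x m) *
      (pochhammer (c - (b + of_nat m)) (n - m) / pochhammer c (n - m))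
   = pochhammer (c - b) n / pochhammer c n * hyp_term [- of_nat n, 1 - c - of_nat n, b, 1 + b - c]
      [x, (1 + b - c - of_nat n) / 2, (2 + b - c - of_nat n) / 2] (1 / 4) m"
proof -
  define P where "P = pochhammer (c - b - of_nat m) (n - m)"
  define Q where "Q = pochhammer (1 + b - c - of_nat n) (2 * m)"
  define R where "R = pochhammer (c - b - of_nat m) m"
  define S where "S = pochhammer (c - b) n"
  define U where "U = pochhammer c (n - m)"
  define V where "V = pochhammer (c + of_nat (n - m)) m"
  define H1 where "H1 = pochhammer ((1 + b - c - of_nat n) / 2) m"
  define H2 where "H2 = pochhammer ((2 + b - c - of_nat n) / 2) m"
  have hd: "Q = 4 ^ m * H1 * H2"
  proof -
    have e1: "2 * ((1 + b - c - of_nat n) / 2) = 1 + b - c - of_nat n" by simp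
    have e2: "(1 + b - c - of_nat n) / 2 + 1 / 2 = (2 + b - c - of_nat n) / 2" by (simp add: field_simps)
    have "(of_nat (2 ^ (2 * m)) :: complex) = 4 ^ m" by (simp add: power_mult)
    then show ?thesis
      using pochhammer_double[of "(1 + b - c - of_nat n) / 2" m]
      unfolding Q_def H1_def H2_def e1 e2 by simp
  qed
  have A: "pochhammer c n = U * V"
    using pochhammer_product[of "n - m" n c] mn unfolding U_def V_def by simp
  have B: "pochhammer (1 - c - of_nat n) m = (-1)^m * V"
    using pochhammer_minus[of "c + of_nat n - 1" m] mn unfolding V_def
    by (simp add: of_nat_diff algebra_simps)
  have C: "pochhammer (1 + b - c) m = (-1)^m * R"
    using pochhammer_minus[of "c - b - 1" m] unfolding R_def
    by (simp add: algebra_simps)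
  have D: "pochhammer (c - b - of_nat m) (m + n) = R * S"
    using pochhammer_product'[of "c - b - of_nat m" m n] unfolding R_def S_def by simp
  have neg1: "((-1::complex)^m)^2 = 1" by (simp flip: power_mult)
  have E: "Q = pochhammer (c - b - of_nat m + of_nat (n - m)) (2 * m)"
    using pochhammer_minus[of "c - b + of_nat n - 1" "2 * m"] mn unfolding Q_def
    by (simp add: of_nat_diff algebra_simps power_mult neg1)
  have D': "pochhammer (c - b - of_nat m) (m + n) = P * Q"
    using pochhammer_product'[of "c - b - of_nat m" "n - m" "2 * m"] mn unfolding P_def E
    by (simp add: algebra_simps)
  have SRPQ: "R * S = P * Q" using D D' by simp
  have U0: "U \<noteq> 0" and V0: "V \<noteq> 0" using cn A by auto
  have Q0: "Q \<noteq> 0" using yn Q_def by simp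
  have H0: "H1 \<noteq> 0" "H2 \<noteq> 0" using Q0 hd by auto
  have sgn: "((-1::complex)^m) * (-1)^m = 1" by (simp flip: power_add)
  have lhs: "pochhammer (c - (b + of_nat m)) (n - m) = P" unfolding P_def by (simp add: algebra_simps)
  show ?thesis
    unfolding hyp_term_def lhs
    apply (simp add: B C A flip: S_def U_def H1_def H2_def)
    using U0 V0 Q0 H0 SRPQ hd sgn
    apply (simp add: field_simps)
    apply (subst mult.assoc[symmetric, of R S])
    apply (simp add: field_simps)
    done
qed

lemma lhs_term:
  fixes a b c :: complex and n k :: nat
  assumes a0: "pochhammer a k \<noteq> 0"
  shows "hyp_term (- of_nat n # [a / 2, (a + 1) / 2, b]) [a, 1 + a - c, c] 4 k =
    pochhammer (- of_nat n) k * pochhammer b k *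
      (pochhammer ((1 + a - c) + c - 1 + of_nat k) k / (pochhammer (1 + a - c) k * pochhammer c k)) / fact k"
proof -
  have e1: "2 * (a / 2) = a" by simp
  have e2: "a / 2 + 1 / 2 = (a + 1) / 2" by (simp add: field_simps)
  have "(of_nat (2 ^ (2 * k)) :: complex) = 4 ^ k" by (simp add: power_mult)
  then have d: "pochhammer a (2 * k) = 4 ^ k * pochhammer (a / 2) k * pochhammer ((a + 1) / 2) k"
    using pochhammer_double[of "a / 2" k] unfolding e1 e2 by simp
  have p: "pochhammer a (2 * k) = pochhammer a k * pochhammer (a + of_nat k) k"
    using pochhammer_product'[of a k k] by (simp add: mult_2)
  have e3: "(1 + a - c) + c - 1 + of_nat k = a + of_nat k" by simp
  have "pochhammer (a / 2) k * pochhammer ((a + 1) / 2) k * 4 ^ k = pochhammer a k * pochhammer (a + of_nat k) k"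
    using d p by (simp add: algebra_simps)
  then show ?thesis
    unfolding hyp_term_def e3 using a0
    by (simp add: field_simps)
qed

lemma sum_tri_swap:
  fixes g :: "nat \<Rightarrow> nat \<Rightarrow> complex"
  shows "(\<Sum>k\<le>n. \<Sum>i\<le>k. g i (k - i)) = (\<Sum>i\<le>n. \<Sum>j\<le>n - i. g i j)"
proof -
  have "(\<Sum>k\<le>n. \<Sum>i\<le>k. g i (k - i)) = (\<Sum>(i,j)\<in>{(i,j). i + j \<le> n}. g i j)"
    by (rule sum.triangle_reindex_eq[symmetric])
  also have "{(i,j). i + j \<le> n} = Sigma {..n} (\<lambda>i. {..n - i})" by auto
  also have "(\<Sum>(i,j)\<in>Sigma {..n} (\<lambda>i. {..n - i}). g i j) = (\<Sum>i\<le>n. \<Sum>j\<le>n - i. g i j)"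
    by (rule sum.Sigma[symmetric]) auto
  finally show ?thesis .
qed

theorem proposition3p2:
  fixes n :: nat and a b c :: complex
  assumes "a \<notin> \<int>\<^sub>\<le>\<^sub>0" and "1 + a - c \<notin> \<int>\<^sub>\<le>\<^sub>0" and "c \<notin> \<int>\<^sub>\<le>\<^sub>0"
    and "(1 + b - c - of_nat n) / 2 \<notin> \<int>\<^sub>\<le>\<^sub>0"
    and "(2 + b - c - of_nat n) / 2 \<notin> \<int>\<^sub>\<le>\<^sub>0"
  shows "hyp_term_series n [a / 2, (a + 1) / 2, b] [a, 1 + a - c, c] 4 =
    pochhammer (c - b) n / pochhammer c n *
    hyp_term_series n [1 - c - of_nat n, b, 1 + b - c]
      [1 + a - c, (1 + b - c - of_nat n) / 2, (2 + b - c - of_nat n) / 2] (1 / 4)"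
proof -
  define x where "x = 1 + a - c"
  have a0: "pochhammer a k \<noteq> 0" for k using assms(1) by (rule poch_nz)
  have x0: "pochhammer x k \<noteq> 0" for k using assms(2) unfolding x_def by (rule poch_nz)
  have c0: "pochhammer c k \<noteq> 0" for k using assms(3) by (rule poch_nz)
  have yn: "pochhammer (1 + b - c - of_nat n) (2 * m) \<noteq> 0" for m
  proof -
    have e1: "2 * ((1 + b - c - of_nat n) / 2) = 1 + b - c - of_nat n" by simp
    have e2: "(1 + b - c - of_nat n) / 2 + 1 / 2 = (2 + b - c - of_nat n) / 2" by (simp add: field_simps)
    show ?thesis
      using pochhammer_double[of "(1 + b - c - of_nat n) / 2" m] poch_nz[OF assms(4), of m] poch_nz[OF assms(5), of m]
      unfolding e1 e2 by simp
  qed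
  define f where "f k m = pochhammer (- of_nat n) k * pochhammer b k *
      (of_nat (k choose m) / (pochhammer c (k - m) * pochhammer x m)) / fact k" for k m
  have "hyp_term_series n [a / 2, (a + 1) / 2, b] [a, 1 + a - c, c] 4 = (\<Sum>k\<le>n. \<Sum>m\<le>k. f k m)"
    unfolding hyp_term_series_def
  proof (rule sum.cong)
    fix k assume "k \<in> {..n}"
    show "hyp_term (- of_nat n # [a / 2, (a + 1) / 2, b]) [a, 1 + a - c, c] 4 k = (\<Sum>m\<le>k. f k m)"
    proof -
      have "hyp_term (- of_nat n # [a / 2, (a + 1) / 2, b]) [a, 1 + a - c, c] 4 k =
        pochhammer (- of_nat n) k * pochhammer b k *
        (pochhammer (x + c - 1 + of_nat k) k / (pochhammer x k * pochhammer c k)) / fact k"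
        using lhs_term[OF a0] unfolding x_def .
      then show ?thesis
        unfolding poch_expand_div[OF x0 c0] f_def
        by (simp add: sum_distrib_left sum_divide_distrib)
    qed
  qed simp
  also have "\<dots> = (\<Sum>i\<le>n. \<Sum>j\<le>n - i. f (i + j) i)"
    using sum_tri_swap[of "\<lambda>i j. f (i + j) i" n] by simp
  also have "\<dots> = (\<Sum>i\<le>n. pochhammer (- of_nat n) i * pochhammer b i / (fact i * pochhammer x i) *
      (\<Sum>j\<le>n - i. pochhammer (b + of_nat i) j * pochhammer (- of_nat (n - i)) j / (fact j * pochhammer c j)))"
  proof (rule sum.cong)
    fix i assume "i \<in> {..n}"
    then have i: "i \<le> n" by simp
    show "(\<Sum>j\<le>n - i. f (i + j) i) = pochhammer (- of_nat n) i * pochhammer b i / (fact i * pochhammer x i) *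
      (\<Sum>j\<le>n - i. pochhammer (b + of_nat i) j * pochhammer (- of_nat (n - i)) j / (fact j * pochhammer c j))"
      unfolding sum_distrib_left
    proof (rule sum.cong)
      fix j assume "j \<in> {..n - i}"
      have e: "- of_nat n + of_nat i = (- of_nat (n - i) :: complex)" using i by (simp add: of_nat_diff)
      have p1: "pochhammer (- of_nat n :: complex) (i + j) = pochhammer (- of_nat n) i * pochhammer (- of_nat (n - i)) j"
        using pochhammer_product'[of "- of_nat n :: complex" i j] unfolding e .
      have p2: "pochhammer b (i + j) = pochhammer b i * pochhammer (b + of_nat i) j"
        using pochhammer_product'[of b i j] .
      have bf: "(of_nat ((i + j) choose i) :: complex) = fact (i + j) / (fact i * fact j)"
        using binomial_fact[of i "i + j", where 'a = complex] by simp
      show "f (i + j) i = pochhammer (- of_nat n) i * pochhammer b i / (fact i * pochhammer x i) *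
         (pochhammer (b + of_nat i) j * pochhammer (- of_nat (n - i)) j / (fact j * pochhammer c j))"
        unfolding f_def p1 p2 bf using x0 c0 by (simp add: field_simps)
    qed simp
  qed simp
  also have "\<dots> = (\<Sum>i\<le>n. pochhammer (- of_nat n) i * pochhammer b i / (fact i * pochhammer x i) *
      (pochhammer (c - (b + of_nat i)) (n - i) / pochhammer c (n - i)))"
  proof (rule sum.cong)
    fix i assume "i \<in> {..n}"
    have cc: "\<forall>j\<in>{0..<n - i}. c \<noteq> - of_nat j" using assms(3) by auto
    have "(\<Sum>j\<le>n - i. pochhammer (b + of_nat i) j * pochhammer (- of_nat (n - i)) j / (fact j * pochhammer c j))
        = pochhammer (c - (b + of_nat i)) (n - i) / pochhammer c (n - i)"
      using Vandermonde_pochhammer[OF cc, of "b + of_nat i"] by (simp add: atLeast0AtMost)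
    then show "pochhammer (- of_nat n) i * pochhammer b i / (fact i * pochhammer x i) *
      (\<Sum>j\<le>n - i. pochhammer (b + of_nat i) j * pochhammer (- of_nat (n - i)) j / (fact j * pochhammer c j)) =
      pochhammer (- of_nat n) i * pochhammer b i / (fact i * pochhammer x i) *
      (pochhammer (c - (b + of_nat i)) (n - i) / pochhammer c (n - i))" by simp
  qed simp
  also have "\<dots> = pochhammer (c - b) n / pochhammer c n *
    hyp_term_series n [1 - c - of_nat n, b, 1 + b - c]
      [1 + a - c, (1 + b - c - of_nat n) / 2, (2 + b - c - of_nat n) / 2] (1 / 4)"
    unfolding hyp_term_series_def sum_distrib_left x_def[symmetric]
    by (rule sum.cong[OF refl], rule rhs_term) (simp_all add: c0 yn)
  finally show ?thesis .
qed

end
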